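(* Let $1\le m\le N$, $a\in V$ and $b\in\wedge^m(V)$. Then $\partial(\mathbf{x})b\in\mathcal{P}_1\otimes\wedge^{m-1}(V)$ and $$\sum_{i=1}^Na_i\mathcal{D}_i\,\partial(\mathbf{x})b=(1+\gamma\kappa)\,\partial(a)b,$$ where the $\mathcal{D}_i$ are the Dunkl operators on $\mathcal{P}\otimes\wedge^{m-1}(V)$. In particular $\partial(\mathbf{x})b$ is singular for $\kappa=-1/\gamma$, i.e. $\mathcal{D}_i\partial(\mathbf{x})b=0$ for all $1\le i\le N$ when $\kappa=-1/\gamma$.
   Context: $R\subset\mathbb{R}^N$ is a reduced root system with $\operatorname{span}_{\mathbb{R}}R=\mathbb{R}^N$, $|v|^2=2$ for all $v\in R$, positive roots $R_+$; $W$ is the reflection group generated by $\sigma_v\colon x\mapsto x-\langle x,v\rangle v$, assumed to have one conjugacy class of reflections, so its reflection representation $\tau$ on $V=\mathbb{R}^N$ is irreducible. $\gamma:=2\#R_+/N$. For $a\in V$, $\partial(a)\colon\wedge^m(V)\to\wedge^{m-1}(V)$ is the linear map $\partial(a)(b_1\wedge\cdots\wedge b_m)=\sum_{i=1}^m(-1)^{i-1}\langle a,b_i\rangle\, b_1\wedge\cdots\wedge\widehat{b_i}\wedge\cdots\wedge b_m$. With $\{u_i\}$ the standard orthonormal basis and $\mathbf{x}=\sum_i x_i\otimes u_i$, $\partial(\mathbf{x})b:=\sum_{i=1}^N x_i\otimes\partial(u_i)b$. $\tau_k$ is the representation of $W$ on $\wedge^k(V)$ induced by $\tau$; $W$ acts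 on $\mathcal{P}\otimes\wedge^k(V)$ by $w(p(x)\otimes b)=p(xw)\otimes\tau_k(w)b$, and the Dunkl operators (constant parameter $\kappa$) are $\mathcal{D}_i(p\otimes b)=\frac{\partial p}{\partial x_i}\otimes b+\kappa\sum_{v\in R_+}\frac{p(x)-p(x\sigma_v)}{\langle x,v\rangle}v_i\otimes\tau_k(\sigma_v)b$. *)

theory Defs
  imports "HOL-Analysis.Analysis"
begin

text \<open>V = real^'n, N = CARD('n), standard orthonormal basis axis i 1.\<close>

text \<open>Reflection along a root v (normalised |v|^2 = 2): x - <x,v> v.\<close>
definition refl :: "real^'n \<Rightarrow> real^'n \<Rightarrow> real^'n" where
  "refl v x = x - (x \<bullet> v) *\<^sub>R v"

definition root_system :: "(real^'n) set \<Rightarrow> bool" where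
  "root_system R \<longleftrightarrow> finite R \<and> 0 \<notin> R \<and> span R = UNIV
     \<and> (\<forall>\<alpha>\<in>R. \<forall>\<beta>\<in>R. refl \<alpha> \<beta> \<in> R)
     \<and> (\<forall>\<alpha>\<in>R. \<forall>c::real. c *\<^sub>R \<alpha> \<in> R \<longrightarrow> c = 1 \<or> c = -1)"

definition positive_roots :: "(real^'n) set \<Rightarrow> (real^'n) set \<Rightarrow> bool" where
  "positive_roots R Rp \<longleftrightarrow>
     (\<exists>u. (\<forall>v\<in>R. u \<bullet> v \<noteq> 0) \<and> Rp = {v\<in>R. u \<bullet> v > 0})"

inductive_set refl_group :: "(real^'n) set \<Rightarrow> (real^'n \<Rightarrow> real^'n) set" for R where
  refl_group_id: "id \<in> refl_group R"
| refl_group_step: "w \<in> refl_group R \<Longrightarrow> v \<in> R \<Longrightarrow> refl v \<circ> w \<in> refl_group R"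

definition one_refl_class :: "(real^'n) set \<Rightarrow> bool" where
  "one_refl_class R \<longleftrightarrow>
     (\<forall>u\<in>R. \<forall>v\<in>R. \<exists>w\<in>refl_group R. w \<circ> refl u = refl v \<circ> w)"

text \<open>Model of the exterior power wedge^k(V): antisymmetric tensors, i.e. coefficient
  functions b on index lists (b(i1..ik) = coefficient w.r.t. u_i1 \<otimes> ... \<otimes> u_ik),
  vanishing off length k and changing sign under transposition of two positions.
  The decomposable b1\<and>...\<and>bk corresponds to the tensor of its k\<times>k minors.\<close>
type_synonym 'n form = "'n list \<Rightarrow> real"

definition wedge :: "nat \<Rightarrow> ('n::finite) form set" where
  "wedge k = {b. (\<forall>is. length is \<noteq> k \<longrightarrow> b is = 0) \<and>
      (\<forall>is i j. i < length is \<and> j < length is \<and> i \<noteq> j \<longrightarrow>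
          b (is[i := is ! j, j := is ! i]) = - b is)}"

text \<open>The operator \<partial>(a): wedge^m \<rightarrow> wedge^(m-1) (interior product; in this model
  \<partial>(a)(b1\<and>...\<and>bm) = \<Sum>_i (-1)^(i-1) <a,b_i> b1\<and>..\<hat>b_i..\<and>bm becomes the contraction below).\<close>
definition contr :: "real^'n \<Rightarrow> ('n::finite) form \<Rightarrow> 'n form" where
  "contr a b = (\<lambda>js. \<Sum>i\<in>UNIV. a $ i * b (i # js))"

definition contr_x :: "('n::finite) form \<Rightarrow> real^'n \<Rightarrow> 'n form" where
  "contr_x b = (\<lambda>x. \<lambda>js. \<Sum>i\<in>UNIV. x $ i * contr (axis i 1) b js)"

definition P1_wedge :: "nat \<Rightarrow> (real^('n::finite) \<Rightarrow> 'n form) set" where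
  "P1_wedge k = {f. \<exists>c::'n \<Rightarrow> 'n form. (\<forall>i. c i \<in> wedge k) \<and>
                     f = (\<lambda>x js. \<Sum>i\<in>UNIV. x $ i * c i js)}"

definition tau_k :: "(real^'n \<Rightarrow> real^'n) \<Rightarrow> ('n::finite) form \<Rightarrow> 'n form" where
  "tau_k g b = (\<lambda>js. \<Sum>is\<in>{is. length is = length js}.
       (\<Prod>l<length js. (g (axis (is ! l) 1)) $ (js ! l)) * b is)"

definition partial_i :: "'n \<Rightarrow> (real^('n::finite) \<Rightarrow> real) \<Rightarrow> real^'n \<Rightarrow> real" where
  "partial_i i p x = deriv (\<lambda>t. p (x + t *\<^sub>R axis i 1)) 0"

text \<open>Divided difference (p(x) - p(x sigma_v)) / <x,v>, componentwise; on the hyperplane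
  <x,v> = 0 it is given by its (polynomial, hence continuous) extension.\<close>
definition divdiff :: "real^'n \<Rightarrow> (real^('n::finite) \<Rightarrow> 'n form) \<Rightarrow> real^'n \<Rightarrow> 'n form" where
  "divdiff v f x = (\<lambda>is. Lim (at x within {y. y \<bullet> v \<noteq> 0})
                          (\<lambda>y. (f y is - f (refl v y) is) / (y \<bullet> v)))"

definition dunkl :: "(real^'n) set \<Rightarrow> real \<Rightarrow> 'n \<Rightarrow> (real^('n::finite) \<Rightarrow> 'n form)
                     \<Rightarrow> real^'n \<Rightarrow> 'n form" where
  "dunkl Rp \<kappa> i f x = (\<lambda>js. partial_i i (\<lambda>y. f y js) x
       + \<kappa> * (\<Sum>v\<in>Rp. v $ i * tau_k (refl v) (divdiff v f x) js))"

end

theory Submission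
  imports Defs
begin

lemma refl_linear: "linear (refl v)"
  by (simp add: refl_def linear_iff inner_add_left algebra_simps)
lemma refl_refl: "v \<bullet> v = 2 \<Longrightarrow> refl v (refl v x) = x"
  by (simp add: refl_def inner_diff_left algebra_simps)
lemma refl_self: "v \<bullet> v = 2 \<Longrightarrow> refl v v = - v"
  by (simp add: refl_def vec_eq_iff)
lemma refl_inner: "v \<bullet> v = 2 \<Longrightarrow> refl v x \<bullet> refl v y = x \<bullet> y"
  by (simp add: refl_def inner_diff_left inner_diff_right algebra_simps inner_commute)
lemma refl_axis: "refl v (axis i 1) $ j = (if i = j then 1 else 0) - v$i * v$j"
proof -
  have "axis i 1 \<bullet> v = v$i" by (simp add: inner_axis')
  then show ?thesis by (simp add: refl_def axis_def)
qed
definition Mop :: "(real^'n) set \<Rightarrow> real^'n \<Rightarrow> real^'n" where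
  "Mop R x = (\<Sum>v\<in>R. (x \<bullet> v) *\<^sub>R v)"
lemma Mop_linear: "linear (Mop R)"
  by (simp add: Mop_def linear_iff inner_add_left scaleR_add_left sum.distrib scaleR_sum_right)
lemma sum_lists_Suc:
  "(\<Sum>is\<in>{is::('n::finite) list. length is = Suc k}. f is) = (\<Sum>i\<in>UNIV. \<Sum>is\<in>{is. length is = k}. f (i#is))"
proof -
  have fin: "finite {is::'n list. length is = k}" using finite_lists_length_eq[of "UNIV::'n set" k] by simp
  have im: "{is::('n::finite) list. length is = Suc k} = (\<lambda>(i,is). i#is) ` (UNIV \<times> {is. length is = k})"
    by (auto simp: image_iff length_Suc_conv)
  have inj: "inj_on (\<lambda>(i,is). i#is) (UNIV \<times> {is::'n list. length is = k})" by (auto simp: inj_on_def)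
  have "(\<Sum>is\<in>{is::('n::finite) list. length is = Suc k}. f is) = (\<Sum>p\<in>UNIV \<times> {is. length is = k}. f (case p of (i,is) \<Rightarrow> i#is))"
    unfolding im by (subst sum.reindex[OF inj]) (simp add: o_def)
  also have "\<dots> = (\<Sum>i\<in>UNIV. \<Sum>is\<in>{is. length is = k}. f (i#is))"
    by (simp add: sum.cartesian_product split_def)
  finally show ?thesis .
qed

lemma tau_gen:
  fixes v :: "real^'n::finite"
  shows "\<forall>F. (\<forall>is l. l < length is \<longrightarrow> (\<Sum>i\<in>UNIV. v$i * F (is[l:=i])) = 0) \<longrightarrow>
    (\<Sum>is\<in>{is. length is = length js}. (\<Prod>l<length js. ((if is!l = js!l then 1 else 0) - v$(is!l) * v$(js!l))) * F is) = F js"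
proof (induction js)
  case Nil
  have "{is::'n list. length is = 0} = {[]}" by auto
  then show ?case by simp
next
  case (Cons j js)
  show ?case
  proof (intro allI impI)
    fix F :: "'n list \<Rightarrow> real"
    assume H: "\<forall>is l. l < length is \<longrightarrow> (\<Sum>i\<in>UNIV. v$i * F (is[l:=i])) = 0"
    let ?A = "\<lambda>i j. (if i = j then 1 else 0) - v$i * v$(j::'n)"
    have "(\<Sum>is\<in>{is. length is = length (j#js)}. (\<Prod>l<length (j#js). ?A (is!l) ((j#js)!l)) * F is)
       = (\<Sum>i\<in>UNIV. \<Sum>is\<in>{is. length is = length js}. (\<Prod>l<Suc (length js). ?A ((i#is)!l) ((j#js)!l)) * F (i#is))"
      by (simp add: sum_lists_Suc)
    also have "\<dots> = (\<Sum>i\<in>UNIV. ?A i j * (\<Sum>is\<in>{is. length is = length js}. (\<Prod>l<length js. ?A (is!l) (js!l)) * F (i#is)))"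
      by (simp only: prod.lessThan_Suc_shift nth_Cons_Suc nth_Cons_0 mult.assoc sum_distrib_left)
    also have "\<dots> = (\<Sum>i\<in>UNIV. ?A i j * F (i#js))"
    proof (rule sum.cong[OF refl])
      fix i
      have "\<forall>is l. l < length is \<longrightarrow> (\<Sum>i'\<in>UNIV. v$i' * F (i # is[l:=i'])) = 0"
      proof (intro allI impI)
        fix "is" l assume "l < length (is::'n list)"
        then have "Suc l < length (i#is)" by simp
        from H[rule_format, OF this] show "(\<Sum>i'\<in>UNIV. v$i' * F (i # is[l:=i'])) = 0" by simp
      qed
      then have "(\<Sum>is\<in>{is. length is = length js}. (\<Prod>l<length js. ?A (is!l) (js!l)) * F (i#is)) = F (i#js)"
        using Cons.IH[rule_format, of "\<lambda>is. F (i#is)"] by simp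
      then show "?A i j * (\<Sum>is\<in>{is. length is = length js}. (\<Prod>l<length js. ?A (is!l) (js!l)) * F (i#is)) = ?A i j * F (i#js)"
        by simp
    qed
    also have "\<dots> = (\<Sum>i\<in>UNIV. (if i = j then F (i#js) else 0) - v$j * (v$i * F (i#js)))"
      by (rule sum.cong[OF refl]) (simp add: algebra_simps)
    also have "\<dots> = F (j#js) - v$j * (\<Sum>i\<in>UNIV. v$i * F (i#js))"
      by (simp only: sum_subtractf sum.delta' sum_distrib_left) simp
    also have "(\<Sum>i\<in>UNIV. v$i * F (i#js)) = 0"
      using H[rule_format, of 0 "j#js"] by simp
    finally show "(\<Sum>is\<in>{is. length is = length (j#js)}. (\<Prod>l<length (j#js). ?A (is!l) ((j#js)!l)) * F is) = F (j#js)"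
      by simp
  qed
qed

lemma tau_fix:
  fixes v :: "real^'n::finite"
  assumes "\<forall>is l. l < length is \<longrightarrow> (\<Sum>i\<in>UNIV. v$i * F (is[l:=i])) = 0"
  shows "tau_k (refl v) F = F"
proof
  fix js
  show "tau_k (refl v) F js = F js"
    unfolding tau_k_def refl_axis using tau_gen[of v js] assms by auto
qed

lemma contr_annih:
  fixes v :: "real^'n::finite"
  assumes "b \<in> wedge m" "l < length is"
  shows "(\<Sum>i\<in>UNIV. v$i * contr v b (is[l:=i])) = 0"
proof -
  have anti: "b (k # is[l:=i]) = - b (i # is[l:=k])" for i k
  proof -
    have "Suc l < length (k # is[l:=i])" using assms(2) by simp
    then have "b ((k # is[l:=i])[0 := (k # is[l:=i]) ! Suc l, Suc l := (k # is[l:=i]) ! 0]) = - b (k # is[l:=i])"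
      using assms(1) unfolding wedge_def by blast
    moreover have "(k # is[l:=i])[0 := (k # is[l:=i]) ! Suc l, Suc l := (k # is[l:=i]) ! 0] = i # is[l:=k]"
      using assms(2) by simp
    ultimately show ?thesis by simp
  qed
  define S where "S = (\<Sum>i\<in>UNIV. \<Sum>k\<in>UNIV. v$i * v$k * b (k # is[l:=i]))"
  have eq: "(\<Sum>i\<in>UNIV. v$i * contr v b (is[l:=i])) = S"
    by (simp add: S_def contr_def sum_distrib_left mult.assoc)
  have "S = (\<Sum>i\<in>UNIV. \<Sum>k\<in>UNIV. - (v$i * v$k * b (i # is[l:=k])))"
    unfolding S_def by (intro sum.cong refl) (metis anti mult_minus_right)
  also have "\<dots> = - (\<Sum>k\<in>UNIV. \<Sum>i\<in>UNIV. v$k * v$i * b (k # is[l:=i]))"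
    by (simp add: sum_negf)
  also have "\<dots> = - S" unfolding S_def by (subst sum.swap) (simp add: mult.commute)
  finally have "S = 0" by simp
  with eq show ?thesis by simp
qed

lemma group_props:
  assumes "\<forall>v\<in>R. v \<bullet> v = 2" "w \<in> refl_group R"
  shows "linear w \<and> (\<forall>x y. w x \<bullet> w y = x \<bullet> y)"
  using assms(2)
proof induction
  case refl_group_id
  then show ?case by (simp add: linear_iff)
next
  case (refl_group_step w v)
  then have "linear (refl v \<circ> w)" using linear_compose refl_linear by blast
  then show ?case using refl_group_step assms(1) by (simp add: refl_inner o_def)
qed

lemma Mop_refl:
  assumes "\<forall>v\<in>R. v \<bullet> v = 2" "\<forall>\<alpha>\<in>R. \<forall>\<beta>\<in>R. refl \<alpha> \<beta> \<in> R" "\<alpha> \<in> R"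
  shows "Mop R (refl \<alpha> x) = refl \<alpha> (Mop R x)"
proof -
  have a2: "\<alpha> \<bullet> \<alpha> = 2" using assms by auto
  have bij: "bij_betw (refl \<alpha>) R R"
    unfolding bij_betw_def inj_on_def
  proof (intro conjI ballI impI)
    fix a b assume "refl \<alpha> a = refl \<alpha> b"
    then show "a = b" by (metis refl_refl[OF a2])
  next
    show "refl \<alpha> ` R = R"
    proof
      show "refl \<alpha> ` R \<subseteq> R" using assms by auto
      show "R \<subseteq> refl \<alpha> ` R"
      proof
        fix v assume "v \<in> R"
        then have "refl \<alpha> v \<in> R" using assms by auto
        moreover have "v = refl \<alpha> (refl \<alpha> v)" by (simp add: refl_refl[OF a2])
        ultimately show "v \<in> refl \<alpha> ` R" by blast
      qed
    qed
  qed
  have "Mop R (refl \<alpha> x) = (\<Sum>u\<in>R. (refl \<alpha> x \<bullet> refl \<alpha> u) *\<^sub>R refl \<alpha> u)"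
    unfolding Mop_def by (rule sum.reindex_bij_betw[OF bij, symmetric])
  also have "\<dots> = (\<Sum>u\<in>R. (x \<bullet> u) *\<^sub>R refl \<alpha> u)" by (simp add: refl_inner[OF a2])
  also have "\<dots> = refl \<alpha> (Mop R x)"
    unfolding Mop_def by (simp add: real_vector.linear_sum[OF refl_linear] linear_cmul[OF refl_linear])
  finally show ?thesis .
qed

lemma Mop_w:
  assumes "\<forall>v\<in>R. v \<bullet> v = 2" "\<forall>\<alpha>\<in>R. \<forall>\<beta>\<in>R. refl \<alpha> \<beta> \<in> R" "w \<in> refl_group R"
  shows "Mop R (w x) = w (Mop R x)"
  using assms(3)
proof (induction arbitrary: x)
  case refl_group_id
  then show ?case by simp
next
  case (refl_group_step w v)
  then show ?case using Mop_refl[OF assms(1,2)] by simp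
qed

lemma Mop_eig:
  assumes "\<forall>v\<in>R. v \<bullet> v = 2" "\<forall>\<alpha>\<in>R. \<forall>\<beta>\<in>R. refl \<alpha> \<beta> \<in> R" "u \<in> R"
  shows "Mop R u = ((Mop R u \<bullet> u) / 2) *\<^sub>R u"
proof -
  have u2: "u \<bullet> u = 2" using assms by auto
  define y where "y = Mop R u"
  have "refl u y = Mop R (refl u u)" unfolding y_def using Mop_refl[OF assms] by simp
  also have "\<dots> = - y" unfolding y_def refl_self[OF u2] by (rule real_vector.linear_neg[OF Mop_linear])
  finally have "y - (y \<bullet> u) *\<^sub>R u = - y" unfolding refl_def .
  then have "2 *\<^sub>R y = (y \<bullet> u) *\<^sub>R u" by (simp add: algebra_simps scaleR_2)
  then have "(1/2) *\<^sub>R (2 *\<^sub>R y) = (1/2) *\<^sub>R ((y \<bullet> u) *\<^sub>R u)" by simp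
  then show ?thesis unfolding y_def[symmetric] by simp
qed

lemma lam_const:
  assumes a1: "\<forall>v\<in>R. v \<bullet> v = 2" and a2: "\<forall>\<alpha>\<in>R. \<forall>\<beta>\<in>R. refl \<alpha> \<beta> \<in> R"
    and oc: "one_refl_class R" and u: "u \<in> R" and v: "v \<in> R"
  shows "Mop R v \<bullet> v = Mop R u \<bullet> u"
proof -
  obtain w where w: "w \<in> refl_group R" "w \<circ> refl u = refl v \<circ> w"
    using oc u v unfolding one_refl_class_def by blast
  have lw: "linear w" and nw: "\<And>x y. w x \<bullet> w y = x \<bullet> y" using group_props[OF a1 w(1)] by auto
  have u2: "u \<bullet> u = 2" and v2: "v \<bullet> v = 2" using a1 u v by auto
  have "w (refl u u) = refl v (w u)" using w(2) by (metis comp_apply)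
  moreover have "w (refl u u) = - w u" by (simp add: refl_self[OF u2] real_vector.linear_neg[OF lw])
  ultimately have eq: "- w u = w u - (w u \<bullet> v) *\<^sub>R v" unfolding refl_def by simp
  have e2: "(w u \<bullet> v) *\<^sub>R v = w u + w u" using eq by (simp add: algebra_simps)
  have wu: "w u = ((w u \<bullet> v) / 2) *\<^sub>R v"
  proof -
    have "((w u \<bullet> v) / 2) *\<^sub>R v = (1/2) *\<^sub>R ((w u \<bullet> v) *\<^sub>R v)" by simp
    also have "\<dots> = (1/2) *\<^sub>R (2 *\<^sub>R w u)" unfolding e2 by (simp add: scaleR_2)
    also have "\<dots> = w u" by simp
    finally show ?thesis by simp
  qed
  define c where "c = (w u \<bullet> v) / 2"
  have c0: "c \<noteq> 0"
  proof
    assume "c = 0"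
    then have "w u = 0" using wu c_def by simp
    then have "w u \<bullet> w u = 0" by simp
    with nw[of u u] u2 show False by simp
  qed
  have wuc: "w u = c *\<^sub>R v" unfolding c_def by (rule wu)
  define lu where "lu = (Mop R u \<bullet> u) / 2"
  define lv where "lv = (Mop R v \<bullet> v) / 2"
  have eu: "Mop R u = lu *\<^sub>R u" unfolding lu_def by (rule Mop_eig[OF a1 a2 u])
  have ev: "Mop R v = lv *\<^sub>R v" unfolding lv_def by (rule Mop_eig[OF a1 a2 v])
  have "Mop R (w u) = w (Mop R u)" by (rule Mop_w[OF a1 a2 w(1)])
  also have "\<dots> = (c * lu) *\<^sub>R v" using wuc eu linear_cmul[OF lw] by (simp add: mult.commute)
  finally have e1: "Mop R (w u) = (c * lu) *\<^sub>R v" .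
  have "Mop R (w u) = (c * lv) *\<^sub>R v" using wuc ev linear_cmul[OF Mop_linear[of R]] by simp
  with e1 have "(c * lu) *\<^sub>R v = (c * lv) *\<^sub>R v" by metis
  moreover have "v \<noteq> 0" using v2 by auto
  ultimately have "c * lu = c * lv" by simp
  with c0 have "lu = lv" by simp
  then show ?thesis unfolding lu_def lv_def by simp
qed

lemma Mop_scalar_all:
  assumes rs: "root_system R" and a1: "\<forall>v\<in>R. v \<bullet> v = 2" and oc: "one_refl_class R"
  shows "Mop R x = (2 * real (card R) / real CARD('n)) *\<^sub>R (x :: real^'n::finite)"
proof -
  have a2: "\<forall>\<alpha>\<in>R. \<forall>\<beta>\<in>R. refl \<alpha> \<beta> \<in> R" and sp: "span R = UNIV" and fin: "finite R"
    using rs unfolding root_system_def by auto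
  obtain k :: 'n where True by blast
  have "R \<noteq> {}"
  proof
    assume "R = {}"
    then have "axis k (1::real) \<in> span {}" using sp by simp
    then show False by (simp add: axis_eq_0_iff)
  qed
  then obtain u0 where u0: "u0 \<in> R" by blast
  define lam where "lam = (Mop R u0 \<bullet> u0) / 2"
  have onR: "Mop R v = lam *\<^sub>R v" if "v \<in> R" for v
    using Mop_eig[OF a1 a2 that] lam_const[OF a1 a2 oc u0 that] unfolding lam_def by simp
  have all: "Mop R y = lam *\<^sub>R y" for y
    by (rule linear_eq_on_span[OF Mop_linear linear_scaleR, where B=R]) (auto simp: onR sp)
  have "(\<Sum>k\<in>UNIV. Mop R (axis k 1) $ k) = (\<Sum>k\<in>(UNIV::'n set). lam)"
    using all by simp
  also have "\<dots> = lam * real CARD('n)" by simp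
  finally have t1: "(\<Sum>k\<in>UNIV. Mop R (axis k 1) $ k) = lam * real CARD('n)" .
  have "(\<Sum>k\<in>UNIV. Mop R (axis k 1) $ k) = (\<Sum>k\<in>UNIV. \<Sum>v\<in>R. v$k * v$k)"
    unfolding Mop_def by (simp add: sum_component inner_axis')
  also have "\<dots> = (\<Sum>v\<in>R. v \<bullet> v)" by (subst sum.swap) (simp add: inner_vec_def)
  also have "\<dots> = 2 * real (card R)" using a1 by simp
  finally have "lam * real CARD('n) = 2 * real (card R)" using t1 by simp
  then have "lam = 2 * real (card R) / real CARD('n)" by (simp add: field_simps)
  then show ?thesis using all by simp
qed

lemma lim_const:
  fixes v x :: "real^'n::finite"
  assumes "v \<noteq> 0" "\<And>y. y \<bullet> v \<noteq> 0 \<Longrightarrow> g y = C"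
  shows "Lim (at x within {y. y \<bullet> v \<noteq> 0}) g = C"
proof -
  let ?S = "{y::real^'n. y \<bullet> v \<noteq> 0}"
  have cl: "closure ?S = UNIV"
  proof -
    have "- ?S = {y. v \<bullet> y = 0}" by (auto simp: inner_commute)
    then have "interior (- ?S) = {}" using assms(1) by simp
    then show ?thesis by (simp add: closure_interior)
  qed
  have op: "open ?S" by (intro open_Collect_neq continuous_intros)
  have lp: "x islimpt ?S"
  proof (cases "x \<in> ?S")
    case True
    then have "x \<in> interior ?S" using op by (simp add: interior_open)
    then show ?thesis by (rule interior_limit_point)
  next
    case False
    have "x \<in> closure ?S" using cl by simp
    with False show ?thesis by (simp add: closure_def)
  qed
  have "eventually (\<lambda>y. g y = C) (at x within ?S)"
    unfolding eventually_at_filter using assms(2) by simp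
  then have "(g \<longlongrightarrow> C) (at x within ?S)" by (rule tendsto_eventually)
  moreover have "\<not> trivial_limit (at x within ?S)" using lp by (simp add: trivial_limit_within)
  ultimately show ?thesis by (simp add: tendsto_Lim)
qed

lemma Rp_facts:
  assumes rs: "root_system R" and a1: "\<forall>v\<in>R. v \<bullet> v = 2" and pr: "positive_roots R Rp"
  shows "Rp \<subseteq> R" "card R = 2 * card Rp"
    "\<And>f :: real^'n::finite \<Rightarrow> 'b::comm_monoid_add. sum f R = (\<Sum>v\<in>Rp. f v + f (- v))"
proof -
  obtain u where u: "\<forall>v\<in>R. u \<bullet> v \<noteq> 0" and Rp: "Rp = {v\<in>R. u \<bullet> v > 0}"
    using pr unfolding positive_roots_def by blast
  have fin: "finite R" and a2: "\<forall>\<alpha>\<in>R. \<forall>\<beta>\<in>R. refl \<alpha> \<beta> \<in> R" using rs unfolding root_system_def by auto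
  have neg: "- v \<in> R" if "v \<in> R" for v
    using a2 that refl_self[of v] a1 by metis
  show sub: "Rp \<subseteq> R" using Rp by auto
  have RU: "R = Rp \<union> uminus ` Rp"
  proof
    show "R \<subseteq> Rp \<union> uminus ` Rp"
    proof
      fix v assume v: "v \<in> R"
      show "v \<in> Rp \<union> uminus ` Rp"
      proof (cases "u \<bullet> v > 0")
        case True then show ?thesis using v Rp by auto
      next
        case False
        then have "u \<bullet> (- v) > 0" using u v by (auto simp: inner_minus_right)
        then have "- v \<in> Rp" using Rp neg[OF v] by auto
        then have "- (- v) \<in> uminus ` Rp" by blast
        then show ?thesis by simp
      qed
    qed
    show "Rp \<union> uminus ` Rp \<subseteq> R" using sub neg by auto
  qed
  have disj: "Rp \<inter> uminus ` Rp = {}" using Rp by (auto simp: inner_minus_right)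
  have finp: "finite Rp" using sub fin finite_subset by blast
  have inj: "inj_on uminus Rp" by (auto simp: inj_on_def)
  show "card R = 2 * card Rp"
    by (subst RU, subst card_Un_disjoint[OF finp _ disj]) (auto simp: finp card_image[OF inj])
  fix f :: "real^'n \<Rightarrow> 'b"
  show "sum f R = (\<Sum>v\<in>Rp. f v + f (- v))"
    by (subst RU, subst sum.union_disjoint[OF finp _ disj]) (auto simp: finp sum.reindex[OF inj] sum.distrib)
qed

lemma Rp_scalar:
  assumes rs: "root_system R" and a1: "\<forall>v\<in>R. v \<bullet> v = 2" and pr: "positive_roots R Rp"
    and oc: "one_refl_class R"
  shows "(\<Sum>v\<in>Rp. (a \<bullet> v) *\<^sub>R v) = (2 * real (card Rp) / real CARD('n)) *\<^sub>R (a :: real^'n::finite)"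
proof -
  have "Mop R a = (\<Sum>v\<in>Rp. (a \<bullet> v) *\<^sub>R v + (a \<bullet> - v) *\<^sub>R (- v))"
    unfolding Mop_def by (rule Rp_facts(3)[OF rs a1 pr])
  also have "\<dots> = 2 *\<^sub>R (\<Sum>v\<in>Rp. (a \<bullet> v) *\<^sub>R v)"
    by (simp only: scaleR_2 sum.distrib[symmetric] inner_minus_right scaleR_minus_left scaleR_minus_right minus_minus)
  finally have "2 *\<^sub>R (\<Sum>v\<in>Rp. (a \<bullet> v) *\<^sub>R v) = (2 * real (card R) / real CARD('n)) *\<^sub>R a"
    using Mop_scalar_all[OF rs a1 oc] by simp
  then have "(1/2) *\<^sub>R (2 *\<^sub>R (\<Sum>v\<in>Rp. (a \<bullet> v) *\<^sub>R v)) = (1/2) *\<^sub>R ((2 * real (card R) / real CARD('n)) *\<^sub>R a)"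
    by simp
  then show ?thesis using Rp_facts(2)[OF rs a1 pr] by simp
qed

lemma contr_axis: "contr (axis i 1) b js = b (i#js)"
proof -
  have "(\<Sum>k\<in>UNIV. axis i 1 $ k * b (k#js)) = (\<Sum>k\<in>UNIV. if k = i then b (k#js) else 0)"
    by (rule sum.cong) (auto simp: axis_def)
  then show ?thesis unfolding contr_def by simp
qed

lemma contr_x_eq: "contr_x b x = contr x b"
  unfolding contr_x_def by (simp add: contr_axis, simp add: contr_def)

lemma contr_add: "contr (x + c *\<^sub>R v) b js = contr x b js + c * contr v b js"
  by (simp add: contr_def algebra_simps sum.distrib sum_distrib_left)

lemma contr_diff: "contr (x - c *\<^sub>R v) b js = contr x b js - c * contr v b js"
  by (simp add: contr_def algebra_simps sum_subtractf sum_distrib_left)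

lemma contr_scale: "contr (c *\<^sub>R v) b js = c * contr v b js"
  by (simp add: contr_def algebra_simps sum_distrib_left)

lemma contr_sum: "contr (\<Sum>v\<in>S. f v *\<^sub>R v) b js = (\<Sum>v\<in>S. f v * contr v b js)"
  unfolding contr_def by (simp add: sum_component sum_distrib_left sum_distrib_right mult.assoc, subst sum.swap, simp)

lemma partial_contr: "partial_i i (\<lambda>y. contr_x b y js) x = b (i#js)"
proof -
  have "(\<lambda>t. contr_x b (x + t *\<^sub>R axis i 1) js) = (\<lambda>t. contr x b js + t * b (i#js))"
    by (simp add: contr_x_eq contr_add contr_axis)
  moreover have "((\<lambda>t. contr x b js + t * b (i#js)) has_field_derivative b (i#js)) (at 0)"
    by (auto intro!: derivative_eq_intros)
  ultimately show ?thesis unfolding partial_i_def by (simp add: DERIV_imp_deriv)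
qed

lemma divdiff_contr:
  assumes "v \<noteq> 0"
  shows "divdiff v (contr_x b) x = contr v b"
proof
  fix "is"
  show "divdiff v (contr_x b) x is = contr v b is"
    unfolding divdiff_def
  proof (rule lim_const[OF assms])
    fix y :: "real^'a" assume "y \<bullet> v \<noteq> 0"
    then show "(contr_x b y is - contr_x b (refl v y) is) / (y \<bullet> v) = contr v b is"
      by (simp add: contr_x_eq refl_def contr_diff)
  qed
qed

lemma dunkl_formula:
  assumes "b \<in> wedge m" "\<forall>v\<in>Rp. v \<noteq> 0"
  shows "dunkl Rp \<kappa> i (contr_x b) x js = b (i#js) + \<kappa> * (\<Sum>v\<in>Rp. v$i * contr v b js)"
proof -
  have "tau_k (refl v) (divdiff v (contr_x b) x) = contr v b" if "v \<in> Rp" for v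
    using divdiff_contr[of v b x] assms that tau_fix[of v "contr v b"] contr_annih[OF assms(1)] by simp
  then show ?thesis unfolding dunkl_def using partial_contr by simp
qed

theorem theorem3p6:
  fixes R Rp :: "(real^'n::finite) set" and \<kappa> :: real and m :: nat
    and a :: "real^'n" and b :: "'n form"
  assumes "root_system R"
    and "\<forall>v\<in>R. v \<bullet> v = 2"
    and "positive_roots R Rp"
    and "one_refl_class R"
    and "1 \<le> m" and "m \<le> CARD('n)"
    and "b \<in> wedge m"
  defines "\<gamma> \<equiv> 2 * real (card Rp) / real CARD('n)"
  shows "contr_x b \<in> P1_wedge (m - 1)
    \<and> (\<forall>x. (\<lambda>js. \<Sum>i\<in>UNIV. a $ i * dunkl Rp \<kappa> i (contr_x b) x js)
            = (\<lambda>js. (1 + \<gamma> * \<kappa>) * contr a b js))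
    \<and> (\<kappa> = - 1 / \<gamma> \<longrightarrow> (\<forall>i x. dunkl Rp \<kappa> i (contr_x b) x = (\<lambda>js. 0)))"
proof -
  note rs = assms(1) and a1 = assms(2) and pr = assms(3) and oc = assms(4) and bw = assms(7)
  have sub: "Rp \<subseteq> R" by (rule Rp_facts(1)[OF rs a1 pr])
  have nz: "\<forall>v\<in>Rp. v \<noteq> 0" using sub a1 by (metis inner_zero_left subsetD zero_neq_numeral)
  have part1: "contr_x b \<in> P1_wedge (m - 1)"
    unfolding P1_wedge_def
  proof (intro CollectI exI conjI allI)
    fix i :: 'n
    show "(\<lambda>js. b (i#js)) \<in> wedge (m - 1)"
      unfolding wedge_def
    proof (intro CollectI conjI allI impI)
      fix js :: "'n list" assume "length js \<noteq> m - 1"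
      then have "length (i#js) \<noteq> m" using assms(5) by auto
      then show "b (i#js) = 0" using bw unfolding wedge_def by blast
    next
      fix js :: "'n list" and p q
      assume h: "p < length js \<and> q < length js \<and> p \<noteq> q"
      then have "Suc p < length (i#js) \<and> Suc q < length (i#js) \<and> Suc p \<noteq> Suc q" by simp
      then have "b ((i#js)[Suc p := (i#js) ! Suc q, Suc q := (i#js) ! Suc p]) = - b (i#js)"
        using bw unfolding wedge_def by blast
      then show "b (i # js[p := js ! q, q := js ! p]) = - b (i#js)" by simp
    qed
  next
    show "contr_x b = (\<lambda>x js. \<Sum>i\<in>UNIV. x $ i * b (i#js))"
      unfolding contr_x_def by (simp add: contr_axis)
  qed
  have part2: "(\<Sum>i\<in>UNIV. a $ i * dunkl Rp \<kappa> i (contr_x b) x js) = (1 + \<gamma> * \<kappa>) * contr a b js"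
    for a x js
  proof -
    have "(\<Sum>i\<in>UNIV. a $ i * dunkl Rp \<kappa> i (contr_x b) x js)
        = (\<Sum>i\<in>UNIV. a $ i * b (i#js)) + \<kappa> * (\<Sum>v\<in>Rp. (\<Sum>i\<in>UNIV. a $ i * v $ i) * contr v b js)"
      by (simp add: dunkl_formula[OF bw nz] algebra_simps sum.distrib sum_distrib_left sum_distrib_right,
          subst sum.swap, simp add: mult.assoc)
    also have "(\<Sum>i\<in>UNIV. a $ i * b (i#js)) = contr a b js" by (simp add: contr_def)
    also have "(\<Sum>v\<in>Rp. (\<Sum>i\<in>UNIV. a $ i * v $ i) * contr v b js) = (\<Sum>v\<in>Rp. (a \<bullet> v) * contr v b js)"
      by (simp add: inner_vec_def)
    also have "\<dots> = contr (\<Sum>v\<in>Rp. (a \<bullet> v) *\<^sub>R v) b js" by (rule contr_sum[symmetric])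
    also have "\<dots> = \<gamma> * contr a b js"
      unfolding Rp_scalar[OF rs a1 pr oc] \<gamma>_def by (rule contr_scale)
    finally show ?thesis by (simp add: algebra_simps)
  qed
  have part3: "dunkl Rp \<kappa> i (contr_x b) x = (\<lambda>js. 0)" if k: "\<kappa> = - 1 / \<gamma>" for i x
  proof -
    have fin: "finite R" and sp: "span R = UNIV" using rs unfolding root_system_def by auto
    have "R \<noteq> {}"
    proof
      assume "R = {}"
      then have "axis i (1::real) \<in> span {}" using sp by simp
      then show False by (simp add: axis_eq_0_iff)
    qed
    then have "card R > 0" using fin by auto
    then have "card Rp > 0" using Rp_facts(2)[OF rs a1 pr] by simp
    then have g0: "\<gamma> \<noteq> 0" unfolding \<gamma>_def by simp
    have z: "1 + \<gamma> * \<kappa> = 0" using g0 k by simp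
    show ?thesis
    proof
      fix js
      have "(\<Sum>k\<in>UNIV. axis i 1 $ k * dunkl Rp \<kappa> k (contr_x b) x js) = (\<Sum>k\<in>UNIV. if k = i then dunkl Rp \<kappa> k (contr_x b) x js else 0)"
        by (rule sum.cong) (auto simp: axis_def)
      then have "dunkl Rp \<kappa> i (contr_x b) x js = (1 + \<gamma> * \<kappa>) * contr (axis i 1) b js"
        using part2[of "axis i 1" x js] by simp
      then show "dunkl Rp \<kappa> i (contr_x b) x js = 0" using z by simp
    qed
  qed
  show ?thesis using part1 part2 part3 by auto
qed

end
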